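(* Let $X$ be a non-trivial vector space over a field $\mathbb{k}$, let $T:X\to X$ be a linear operator with no non-trivial finite dimensional invariant subspaces, and let $A\subseteq X$ be a $T$-independent set. Then $F(A,T)$ is a linear subspace of $X$ invariant for $T$, and for every $x\in F(A,T)$ and $a\in A$ the rational function $f_{x,a}=\frac{p_a}{q}\in\mathcal{R}$, where $q\in\mathcal{P}^*$ and $\{p_a\}_{a\in A}\in\mathcal{P}^{(A)}$ satisfy $q(T)x=\sum_{a\in A}p_a(T)a$, does not depend on the choice of such $q$ and $\{p_a\}$. Moreover, the map $J:F(A,T)\to\mathcal{R}^{(A)}$, $Jx=\{f_{x,a}\}_{a\in A}$, is well defined, linear, injective, and satisfies $JTx=M^{(A)}Jx$ for every $x\in F(A,T)$. In particular, $J(F(A,T))$ is invariant under $M^{(A)}$ and the restriction $T|_{F(A,T)}$ is similar (via $J$) to the restriction of $M^{(A)}$ to $J(F(A,T))$.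
   Context: $\mathcal{P}=\mathbb{k}[t]$, $\mathcal{P}^*=\mathcal{P}\setminus\{0\}$, $\mathcal{R}=\mathbb{k}(t)$. For a set $A$ and a vector space $Z$, $Z^{(A)}=\{z\in Z^A:\{\alpha\in A:z_\alpha\neq0\}\text{ is finite}\}$. $M:\mathcal{R}\to\mathcal{R}$ is $Mf(z)=zf(z)$ and $M^{(A)}$ on $\mathcal{R}^{(A)}$ is $(M^{(A)}f)_\alpha=Mf_\alpha$. Vectors $x_1,\dots,x_n\in X$ are $T$-independent if for any polynomials $p_1,\dots,p_n\in\mathcal{P}$ the equality $p_1(T)x_1+\dots+p_n(T)x_n=0$ implies $p_j=0$ for all $j$; a set $A\subseteq X$ is $T$-independent if any pairwise different $x_1,\dots,x_n\in A$ are $T$-independent. $E(A,T)=\mathrm{span}\bigl(\bigcup_{n\geq0}T^n(A)\bigr)$ and $F(A,T)=\bigcup_{p\in\mathcal{P}^*}p(T)^{-1}(E(A,T))$; equivalently $F(A,T)$ is the set of $x\in X$ for which $q(T)x=\sum_{a\in A}p_a(T)a$ for some $q\in\mathcal{P}^*$ and $\{p_a\}_{a\in A}\in\mathcal{P}^{(A)}$. A non-trivial subspace means one different from $\{0\}$; invariant means mapped into itself. *)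

theory Defs
  imports Main "HOL-Computational_Algebra.Polynomial" "HOL-Computational_Algebra.Fraction_Field"
begin

text \<open>A vector space X over a field 'k is the type 'x with scalar multiplication
  scale, assumed to satisfy vector_space scale.  Polynomials p in k[t] are 'k poly,
  rational functions k(t) are 'k poly fract.\<close>

definition poly_op :: "('k::field \<Rightarrow> 'x::ab_group_add \<Rightarrow> 'x) \<Rightarrow> ('x \<Rightarrow> 'x) \<Rightarrow> 'k poly \<Rightarrow> 'x \<Rightarrow> 'x" where
  "poly_op scale T p x = (\<Sum>i\<le>degree p. scale (coeff p i) ((T ^^ i) x))"

definition T_independent :: "('k::field \<Rightarrow> 'x::ab_group_add \<Rightarrow> 'x) \<Rightarrow> ('x \<Rightarrow> 'x) \<Rightarrow> 'x set \<Rightarrow> bool" where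
  "T_independent scale T A \<longleftrightarrow>
     (\<forall>(xs :: 'x list) (ps :: 'k poly list).
        set xs \<subseteq> A \<longrightarrow> distinct xs \<longrightarrow> length ps = length xs \<longrightarrow>
        (\<Sum>j<length xs. poly_op scale T (ps ! j) (xs ! j)) = 0 \<longrightarrow>
        (\<forall>j<length xs. ps ! j = 0))"

text \<open>Finitely supported families {p_a} in P^(A), represented as functions
  'x => 'k poly vanishing outside A with finite support.\<close>
definition fin_supp_on :: "'x set \<Rightarrow> ('x \<Rightarrow> 'b::zero) \<Rightarrow> bool" where
  "fin_supp_on A p \<longleftrightarrow> finite {a. p a \<noteq> 0} \<and> {a. p a \<noteq> 0} \<subseteq> A"

definition F_rep :: "('k::field \<Rightarrow> 'x::ab_group_add \<Rightarrow> 'x) \<Rightarrow> ('x \<Rightarrow> 'x) \<Rightarrow> 'x set \<Rightarrow> 'x \<Rightarrow> 'k poly \<Rightarrow> ('x \<Rightarrow> 'k poly) \<Rightarrow> bool" where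
  "F_rep scale T A x q p \<longleftrightarrow> q \<noteq> 0 \<and> fin_supp_on A p \<and>
     poly_op scale T q x = (\<Sum>a\<in>{a. p a \<noteq> 0}. poly_op scale T (p a) a)"

definition E_set :: "('k::field \<Rightarrow> 'x::ab_group_add \<Rightarrow> 'x) \<Rightarrow> ('x \<Rightarrow> 'x) \<Rightarrow> 'x set \<Rightarrow> 'x set" where
  "E_set scale T A = module.span scale (\<Union>n. (T ^^ n) ` A)"

definition F_set :: "('k::field \<Rightarrow> 'x::ab_group_add \<Rightarrow> 'x) \<Rightarrow> ('x \<Rightarrow> 'x) \<Rightarrow> 'x set \<Rightarrow> 'x set" where
  "F_set scale T A = (\<Union>p\<in>{p :: 'k poly. p \<noteq> 0}. (poly_op scale T p) -` E_set scale T A)"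

definition J_map :: "('k::field \<Rightarrow> 'x::ab_group_add \<Rightarrow> 'x) \<Rightarrow> ('x \<Rightarrow> 'x) \<Rightarrow> 'x set \<Rightarrow> 'x \<Rightarrow> 'x \<Rightarrow> 'k poly fract" where
  "J_map scale T A x =
     (let (q, p) = (SOME (q, p). F_rep scale T A x q p) in (\<lambda>a. Fract (p a) q))"

definition M_op :: "('x \<Rightarrow> 'k::field poly fract) \<Rightarrow> ('x \<Rightarrow> 'k poly fract)" where
  "M_op f = (\<lambda>a. Fract [:0, 1:] 1 * f a)"

definition R_scale :: "'k::field \<Rightarrow> ('x \<Rightarrow> 'k poly fract) \<Rightarrow> ('x \<Rightarrow> 'k poly fract)" where
  "R_scale c f = (\<lambda>a. Fract [:c:] 1 * f a)"

end

theory Submission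
  imports Defs
begin

locale opT = vector_space scale for scale :: "'k::field \<Rightarrow> 'x::ab_group_add \<Rightarrow> 'x" +
  fixes T :: "'x \<Rightarrow> 'x"
  assumes lin: "Vector_Spaces.linear scale scale T"
begin

lemma T_add: "T (x + y) = T x + T y"
  using lin by (simp add: Vector_Spaces.linear_iff)
lemma T_scale: "T (scale c x) = scale c (T x)"
  using lin by (simp add: Vector_Spaces.linear_iff)

lemma T_zero [simp]: "T 0 = 0"
  by (metis add_cancel_right_right T_add)

lemma T_sum: "T (sum f B) = (\<Sum>a\<in>B. T (f a))"
  by (induction B rule: infinite_finite_induct) (auto simp: T_zero T_add)

abbreviation P where "P \<equiv> poly_op scale T"

lemma P_sum_n: "degree p \<le> n \<Longrightarrow> P p x = (\<Sum>i\<le>n. scale (coeff p i) ((T ^^ i) x))"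
  unfolding poly_op_def
  by (rule sum.mono_neutral_left) (auto simp: coeff_eq_0)

lemma P_0 [simp]: "P 0 x = 0"
  unfolding poly_op_def by simp

lemma P_pCons: "P (pCons a p) x = scale a x + T (P p x)"
proof -
  have "P (pCons a p) x = (\<Sum>i\<le>Suc (degree p). scale (coeff (pCons a p) i) ((T ^^ i) x))"
    by (rule P_sum_n) (simp add: degree_pCons_le)
  also have "\<dots> = scale a x + (\<Sum>i\<le>degree p. scale (coeff p i) ((T ^^ Suc i) x))"
    by (subst sum.atMost_Suc_shift) simp
  also have "\<dots> = scale a x + T (P p x)"
    unfolding poly_op_def T_sum by (simp add: T_scale)
  finally show ?thesis .
qed

lemma P_add_x: "P p (x + y) = P p x + P p y"
  by (induction p) (auto simp: P_pCons T_add scale_right_distrib algebra_simps)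

lemma P_zero_x [simp]: "P p 0 = 0"
  by (metis add_cancel_right_right P_add_x)

lemma P_scale_x: "P p (scale c x) = scale c (P p x)"
  by (induction p) (auto simp: P_pCons T_add T_scale scale_right_distrib mult.commute)

lemma P_sum_x: "P p (sum f B) = (\<Sum>a\<in>B. P p (f a))"
  by (induction B rule: infinite_finite_induct) (auto simp: P_add_x)

lemma P_T_x: "P p (T x) = T (P p x)"
  by (induction p) (auto simp: P_pCons T_add T_scale)

lemma P_add_p: "P (p + q) x = P p x + P q x"
proof (induction p arbitrary: q)
  case 0 then show ?case by simp
next
  case (pCons a p)
  obtain b q' where q: "q = pCons b q'" by (cases q) auto
  show ?case using pCons(2)[of q'] unfolding q
    by (simp add: P_pCons T_add scale_left_distrib algebra_simps)
qed

lemma P_smult: "P (smult c p) x = scale c (P p x)"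
  by (induction p) (auto simp: P_pCons T_scale scale_right_distrib)

lemma P_mult: "P (p * q) x = P p (P q x)"
  by (induction p) (auto simp: P_pCons P_add_p P_smult)

lemma P_const: "P [:c:] x = scale c x"
  by (simp add: P_pCons T_zero)

lemma P_X: "P [:0, 1:] x = T x"
  by (simp add: P_pCons P_const)

lemma P_monom: "P (monom 1 n) x = (T ^^ n) x"
  by (induction n) (auto simp: monom_Suc P_pCons P_const monom_0)

lemma P_minus_p: "P (p - q) x = P p x - P q x"
  by (metis P_add_p add_diff_cancel_right' diff_add_cancel eq_diff_eq)

lemma P_comm: "P p (P q x) = P q (P p x)"
  by (metis P_mult mult.commute)


lemma sum_supp: "finite B \<Longrightarrow> {a. g a \<noteq> 0} \<subseteq> B \<Longrightarrow>
   (\<Sum>a\<in>{a. g a \<noteq> 0}. P (g a) a) = (\<Sum>a\<in>B. P (g a) a)"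
  by (rule sum.mono_neutral_left) auto

lemma indepB:
  assumes ind: "T_independent scale T A" and B: "finite B" "B \<subseteq> A"
    and s: "(\<Sum>a\<in>B. P (g a) a) = 0" and a: "a \<in> B"
  shows "g a = 0"
proof -
  obtain xs where xs: "set xs = B" "distinct xs" using finite_distinct_list[OF B(1)] by blast
  have "(\<Sum>j<length xs. P (map g xs ! j) (xs ! j)) = (\<Sum>a\<in>B. P (g a) a)"
    unfolding xs(1)[symmetric] sum.distinct_set_conv_list[OF xs(2)] sum_list_sum_nth
    by (simp add: atLeast0LessThan)
  then have "\<forall>j<length xs. map g xs ! j = 0"
    using ind B xs s unfolding T_independent_def
    apply (elim allE[of _ xs] allE[of _ "map g xs"])
    by simp
  moreover obtain j where "j < length xs" "xs ! j = a" using a xs(1) by (metis in_set_conv_nth)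
  ultimately show ?thesis by auto
qed

lemma F_rep_B:
  assumes "finite B" "{a. p a \<noteq> 0} \<subseteq> B" "B \<subseteq> A" "q \<noteq> 0"
  shows "F_rep scale T A x q p \<longleftrightarrow> P q x = (\<Sum>a\<in>B. P (p a) a)"
  using assms sum_supp[OF assms(1,2)] finite_subset[OF assms(2,1)]
  unfolding F_rep_def fin_supp_on_def by auto

lemma rep_unique:
  assumes ind: "T_independent scale T A"
    and r1: "F_rep scale T A x q p" and r2: "F_rep scale T A x q' p'"
  shows "q' * p a = q * p' a"
proof -
  define B where "B = {a. p a \<noteq> 0} \<union> {a. p' a \<noteq> 0}"
  have B: "finite B" "B \<subseteq> A" using r1 r2 unfolding B_def F_rep_def fin_supp_on_def by auto
  have e1: "P q x = (\<Sum>a\<in>B. P (p a) a)"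
    using F_rep_B[OF B(1) _ B(2)] r1 unfolding B_def F_rep_def by blast
  have e2: "P q' x = (\<Sum>a\<in>B. P (p' a) a)"
    using F_rep_B[OF B(1) _ B(2)] r2 unfolding B_def F_rep_def by blast
  have "P q' (P q x) = (\<Sum>a\<in>B. P (q' * p a) a)"
    unfolding e1 P_sum_x P_mult ..
  moreover have "P q (P q' x) = (\<Sum>a\<in>B. P (q * p' a) a)"
    unfolding e2 P_sum_x P_mult ..
  ultimately have "(\<Sum>a\<in>B. P (q' * p a - q * p' a) a) = 0"
    by (simp add: P_minus_p sum_subtractf P_comm)
  then have h: "a \<in> B \<Longrightarrow> q' * p a - q * p' a = 0"
    using indepB[OF ind B, of "\<lambda>a. q' * p a - q * p' a"] by simp
  show ?thesis
  proof (cases "a \<in> B")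
    case True then show ?thesis using h by (simp only: right_minus_eq)
  next
    case False then have "p a = 0" "p' a = 0" unfolding B_def by auto
    then show ?thesis by simp
  qed
qed

lemma rep_unique_fract:
  assumes ind: "T_independent scale T A"
    and r1: "F_rep scale T A x q p" and r2: "F_rep scale T A x q' p'"
  shows "Fract (p a) q = Fract (p' a) q'"
proof -
  have "q \<noteq> 0" "q' \<noteq> 0" using r1 r2 unfolding F_rep_def by auto
  moreover have "p a * q' = p' a * q" using rep_unique[OF assms, of a]
    by (metis mult.commute)
  ultimately show ?thesis using eq_fract(1)[of q q' "p a" "p' a"] by blast
qed

lemma rep_sumB: "F_rep scale T A x q p \<Longrightarrow> finite B \<Longrightarrow> {a. p a \<noteq> 0} \<subseteq> B \<Longrightarrow>
   P q x = (\<Sum>a\<in>B. P (p a) a)"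
  unfolding F_rep_def by (simp add: sum_supp)

lemma rep_intro: "q \<noteq> 0 \<Longrightarrow> fin_supp_on A p \<Longrightarrow> finite B \<Longrightarrow> {a. p a \<noteq> 0} \<subseteq> B \<Longrightarrow>
   P q x = (\<Sum>a\<in>B. P (p a) a) \<Longrightarrow> F_rep scale T A x q p"
  unfolding F_rep_def by (simp add: sum_supp)

lemma mul_rep: "F_rep scale T A x q p \<Longrightarrow> finite B \<Longrightarrow> {a. p a \<noteq> 0} \<subseteq> B \<Longrightarrow>
   P (q * r) x = (\<Sum>a\<in>B. P (p a * r) a)"
proof -
  assume h: "F_rep scale T A x q p" "finite B" "{a. p a \<noteq> 0} \<subseteq> B"
  have "P (q * r) x = P r (P q x)" by (simp add: P_mult P_comm)
  also have "\<dots> = (\<Sum>a\<in>B. P r (P (p a) a))" using rep_sumB[OF h] by (simp add: P_sum_x)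
  also have "\<dots> = (\<Sum>a\<in>B. P (p a * r) a)" by (simp add: P_mult P_comm)
  finally show ?thesis .
qed

lemma fin_supp_sub: "fin_supp_on A p \<Longrightarrow> {a. g a \<noteq> 0} \<subseteq> {a. p a \<noteq> 0} \<union> {a. p' a \<noteq> 0}
   \<Longrightarrow> fin_supp_on A p' \<Longrightarrow> fin_supp_on A g"
  unfolding fin_supp_on_def
proof (elim conjE, intro conjI)
  assume h: "finite {a. p a \<noteq> 0}" "{a. p a \<noteq> 0} \<subseteq> A" "finite {a. p' a \<noteq> 0}" "{a. p' a \<noteq> 0} \<subseteq> A"
    "{a. g a \<noteq> 0} \<subseteq> {a. p a \<noteq> 0} \<union> {a. p' a \<noteq> 0}"
  then show "finite {a. g a \<noteq> 0}" using finite_subset by blast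
  show "{a. g a \<noteq> 0} \<subseteq> A" using h by blast
qed

lemma P_degree_span: "P s x \<in> span ((\<lambda>i. (T ^^ i) x) ` {..<d})" if "degree s < d"
  unfolding poly_op_def
  by (rule span_sum, rule span_scale, rule span_base) (use that in auto)

lemma P_inj:
  assumes nfd: "\<And>Y. subspace Y \<Longrightarrow> Y \<noteq> {0} \<Longrightarrow> T ` Y \<subseteq> Y \<Longrightarrow> \<not> (\<exists>B. finite B \<and> span B = Y)"
    and q: "q \<noteq> 0" and z: "P q x = 0"
  shows "x = 0"
proof (rule ccontr)
  assume x: "x \<noteq> 0"
  define d where "d = degree q"
  have d: "d > 0"
  proof (rule ccontr)
    assume "\<not> d > 0"
    then obtain c where "q = [:c:]" using degree0_coeffs d_def by auto
    with q z x show False by (simp add: P_const)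
  qed
  define S where "S = (\<lambda>i. (T ^^ i) x) ` {..<d}"
  define Y where "Y = span S"
  have all: "P r x \<in> Y" for r
  proof -
    have "P r x = P (r div q * q + r mod q) x" by simp
    also have "\<dots> = P (r mod q) x" by (simp only: P_add_p P_mult z P_zero_x add_0)
    finally have e: "P r x = P (r mod q) x" .
    have "degree (r mod q) < d" using degree_mod_less[OF q, of r] d d_def by auto
    then show ?thesis unfolding e Y_def S_def by (rule P_degree_span)
  qed
  have rep: "\<exists>r. y = P r x" if "y \<in> Y" for y
    using that unfolding Y_def
  proof (rule span_induct)
    show "subspace {y. \<exists>r. y = P r x}"
    proof (rule subspaceI, goal_cases)
      case 1 have "0 = P 0 x" by simp then show ?case by blast
    next
      case (2 y1 y2)
      then obtain r1 r2 where "y1 = P r1 x" "y2 = P r2 x" by blast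
      then have "y1 + y2 = P (r1 + r2) x" by (simp add: P_add_p)
      then show ?case by blast
    next
      case (3 c y)
      then obtain r1 where "y = P r1 x" by blast
      then have "scale c y = P (smult c r1) x" by (simp add: P_smult)
      then show ?case by blast
    qed
  next
    fix y assume "y \<in> S"
    then obtain i where "y = (T ^^ i) x" unfolding S_def by blast
    then have "y = P (monom 1 i) x" by (simp add: P_monom)
    then show "\<exists>r. y = P r x" by blast
  qed
  have TY: "T ` Y \<subseteq> Y"
  proof
    fix z assume "z \<in> T ` Y"
    then obtain y where "y \<in> Y" "z = T y" by auto
    then obtain r where "z = T (P r x)" using rep by auto
    then have "z = P (pCons 0 r) x" by (simp add: P_pCons)
    then show "z \<in> Y" using all by simp
  qed
  have "x \<in> S" unfolding S_def using d
    by (metis funpow_0 image_eqI lessThan_iff)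
  then have "x \<in> Y" unfolding Y_def by (rule span_base)
  then have Yne: "Y \<noteq> {0}" using x by blast
  have sub: "subspace Y" unfolding Y_def by (rule subspace_span)
  have fin: "finite S" unfolding S_def by simp
  show False using nfd[OF sub Yne TY] fin unfolding Y_def by blast
qed

lemma representable:
  assumes "y \<in> span (\<Union>n. (T ^^ n) ` A)"
  shows "\<exists>g. fin_supp_on A g \<and> y = (\<Sum>a\<in>{a. g a \<noteq> 0}. P (g a) a)"
proof (rule span_induct[OF assms])
  show "subspace {y. \<exists>g. fin_supp_on A g \<and> y = (\<Sum>a\<in>{a. g a \<noteq> 0}. P (g a) a)}"
  proof (rule subspaceI, goal_cases)
    case 1 show ?case
      by (intro CollectI exI[of _ "\<lambda>_. 0"]) (simp add: fin_supp_on_def)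
  next
    case (2 y1 y2)
    then obtain g1 g2 where g: "fin_supp_on A g1" "y1 = (\<Sum>a\<in>{a. g1 a \<noteq> 0}. P (g1 a) a)"
      "fin_supp_on A g2" "y2 = (\<Sum>a\<in>{a. g2 a \<noteq> 0}. P (g2 a) a)" by auto
    define B where "B = {a. g1 a \<noteq> 0} \<union> {a. g2 a \<noteq> 0}"
    have B: "finite B" using g unfolding B_def fin_supp_on_def by auto
    have f: "fin_supp_on A (\<lambda>a. g1 a + g2 a)"
      by (rule fin_supp_sub[OF g(1) _ g(3)]) auto
    have e1: "y1 = (\<Sum>a\<in>B. P (g1 a) a)" unfolding g(2) by (rule sum_supp[OF B]) (auto simp: B_def)
    have e2: "y2 = (\<Sum>a\<in>B. P (g2 a) a)" unfolding g(4) by (rule sum_supp[OF B]) (auto simp: B_def)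
    have "y1 + y2 = (\<Sum>a\<in>B. P (g1 a + g2 a) a)"
      unfolding e1 e2 by (simp add: P_add_p sum.distrib)
    also have "\<dots> = (\<Sum>a\<in>{a. g1 a + g2 a \<noteq> 0}. P (g1 a + g2 a) a)"
      by (rule sum_supp[symmetric, OF B]) (auto simp: B_def)
    finally show ?case using f by blast
  next
    case (3 c y)
    then obtain g where g: "fin_supp_on A g" "y = (\<Sum>a\<in>{a. g a \<noteq> 0}. P (g a) a)" by auto
    have B: "finite {a. g a \<noteq> 0}" using g unfolding fin_supp_on_def by auto
    have f: "fin_supp_on A (\<lambda>a. smult c (g a))"
      by (rule fin_supp_sub[OF g(1) _ g(1)]) auto
    have "scale c y = (\<Sum>a\<in>{a. g a \<noteq> 0}. P (smult c (g a)) a)"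
      unfolding g(2) by (simp add: P_smult scale_sum_right)
    also have "\<dots> = (\<Sum>a\<in>{a. smult c (g a) \<noteq> 0}. P (smult c (g a)) a)"
      by (rule sum_supp[symmetric, OF B]) auto
    finally show ?case using f by blast
  qed
next
  fix y assume "y \<in> (\<Union>n. (T ^^ n) ` A)"
  then obtain n a where a: "a \<in> A" "y = (T ^^ n) a" by auto
  define g where "g = (\<lambda>b. if b = a then monom (1::'k) n else 0)"
  have s: "{b. g b \<noteq> 0} = {a}" unfolding g_def by auto
  have "fin_supp_on A g" unfolding fin_supp_on_def s using a by auto
  moreover have "y = (\<Sum>b\<in>{b. g b \<noteq> 0}. P (g b) b)" unfolding s using a by (simp add: g_def P_monom)
  ultimately show "\<exists>g. fin_supp_on A g \<and> y = (\<Sum>a\<in>{a. g a \<noteq> 0}. P (g a) a)" by blast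
qed

lemma F_iff: "x \<in> F_set scale T A \<longleftrightarrow> (\<exists>q p. F_rep scale T A x q p)"
proof
  assume "x \<in> F_set scale T A"
  then obtain q where q: "q \<noteq> 0" "P q x \<in> span (\<Union>n. (T ^^ n) ` A)"
    unfolding F_set_def E_set_def by auto
  then obtain g where "fin_supp_on A g" "P q x = (\<Sum>a\<in>{a. g a \<noteq> 0}. P (g a) a)"
    using representable by blast
  then show "\<exists>q p. F_rep scale T A x q p" using q unfolding F_rep_def by blast
next
  assume "\<exists>q p. F_rep scale T A x q p"
  then obtain q p where r: "F_rep scale T A x q p" by blast
  have e: "P q x = (\<Sum>a\<in>{a. p a \<noteq> 0}. P (p a) a)" and sub: "{a. p a \<noteq> 0} \<subseteq> A"
    using r unfolding F_rep_def fin_supp_on_def by blast+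
  have "P (p a) a \<in> span (\<Union>n. (T ^^ n) ` A)" if "a \<in> {a. p a \<noteq> 0}" for a
  proof -
    have "a \<in> A" using that sub by blast
    then have "(T ^^ i) a \<in> (\<Union>n. (T ^^ n) ` A)" for i by blast
    then show ?thesis unfolding poly_op_def by (intro span_sum span_scale span_base)
  qed
  then have "P q x \<in> span (\<Union>n. (T ^^ n) ` A)" unfolding e by (rule span_sum)
  then show "x \<in> F_set scale T A" using r unfolding F_set_def E_set_def F_rep_def by auto
qed


lemma Fract0: "q \<noteq> 0 \<Longrightarrow> Fract (a::'k poly) q = 0 \<longleftrightarrow> a = 0"
  unfolding Zero_fract_def using eq_fract(1)[of q 1 a 0] by simp

lemma rep_fin: "F_rep scale T A x q p \<Longrightarrow> finite {a. p a \<noteq> 0}"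
  unfolding F_rep_def fin_supp_on_def by blast

lemma rep_add:
  assumes r1: "F_rep scale T A x q p" and r2: "F_rep scale T A y q' p'"
  shows "F_rep scale T A (x + y) (q * q') (\<lambda>a. p a * q' + p' a * q)"
proof -
  define B where "B = {a. p a \<noteq> 0} \<union> {a. p' a \<noteq> 0}"
  have B: "finite B" using rep_fin[OF r1] rep_fin[OF r2] unfolding B_def by blast
  have q: "q \<noteq> 0" "q' \<noteq> 0" using r1 r2 unfolding F_rep_def by blast+
  have fs: "fin_supp_on A (\<lambda>a. p a * q' + p' a * q)"
    by (rule fin_supp_sub[of A p _ p']) (use r1 r2 in \<open>auto simp: F_rep_def\<close>)
  have e1: "P (q * q') x = (\<Sum>a\<in>B. P (p a * q') a)"
    by (rule mul_rep[OF r1 B]) (auto simp: B_def)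
  have e2: "P (q * q') y = (\<Sum>a\<in>B. P (p' a * q) a)"
    by (subst mult.commute, rule mul_rep[OF r2 B]) (auto simp: B_def)
  have "P (q * q') (x + y) = (\<Sum>a\<in>B. P (p a * q' + p' a * q) a)"
    unfolding P_add_x e1 e2 by (simp add: P_add_p sum.distrib)
  then show ?thesis
    by (intro rep_intro[OF _ fs B]) (auto simp: B_def q)
qed

lemma rep_scale:
  assumes r: "F_rep scale T A x q p"
  shows "F_rep scale T A (scale c x) q (\<lambda>a. [:c:] * p a)"
proof -
  define B where "B = {a. p a \<noteq> 0}"
  have B: "finite B" using rep_fin[OF r] unfolding B_def by blast
  have q: "q \<noteq> 0" using r unfolding F_rep_def by blast
  have fs: "fin_supp_on A (\<lambda>a. [:c:] * p a)"
    by (rule fin_supp_sub[of A p _ p]) (use r in \<open>auto simp: F_rep_def\<close>)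
  have e: "P q x = (\<Sum>a\<in>B. P (p a) a)" by (rule rep_sumB[OF r B]) (auto simp: B_def)
  have "P q (scale c x) = (\<Sum>a\<in>B. P ([:c:] * p a) a)"
    unfolding P_scale_x e by (simp add: scale_sum_right P_smult)
  then show ?thesis
    by (intro rep_intro[OF q fs B]) (auto simp: B_def)
qed

lemma rep_T:
  assumes r: "F_rep scale T A x q p"
  shows "F_rep scale T A (T x) q (\<lambda>a. [:0, 1:] * p a)"
proof -
  define B where "B = {a. p a \<noteq> 0}"
  have B: "finite B" using rep_fin[OF r] unfolding B_def by blast
  have q: "q \<noteq> 0" using r unfolding F_rep_def by blast
  have fs: "fin_supp_on A (\<lambda>a. [:0, 1:] * p a)"
    by (rule fin_supp_sub[of A p _ p]) (use r in \<open>auto simp: F_rep_def\<close>)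
  have e: "P q x = (\<Sum>a\<in>B. P (p a) a)" by (rule rep_sumB[OF r B]) (auto simp: B_def)
  have "P q (T x) = (\<Sum>a\<in>B. P ([:0, 1:] * p a) a)"
    unfolding P_T_x e T_sum by (simp only: P_mult P_X)
  then show ?thesis
    by (intro rep_intro[OF q fs B]) (auto simp: B_def)
qed

lemma rep_zero: "F_rep scale T A 0 1 (\<lambda>_. 0)"
  unfolding F_rep_def fin_supp_on_def by simp

lemma J_eq:
  assumes ind: "T_independent scale T A" and r: "F_rep scale T A x q p"
  shows "J_map scale T A x = (\<lambda>a. Fract (p a) q)"
proof -
  let ?c = "SOME c. (case c of (q, p) \<Rightarrow> F_rep scale T A x q p)"
  have ex: "\<exists>c. (case c of (q, p) \<Rightarrow> F_rep scale T A x q p)" using r by auto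
  obtain q0 p0 where c: "?c = (q0, p0)" by (cases ?c)
  have r0: "F_rep scale T A x q0 p0" using someI_ex[OF ex] c by simp
  have "J_map scale T A x = (\<lambda>a. Fract (p0 a) q0)" unfolding J_map_def c by simp
  then show ?thesis using rep_unique_fract[OF ind r0 r] by auto
qed

lemma J_inj:
  assumes nfd: "\<And>Y. subspace Y \<Longrightarrow> Y \<noteq> {0} \<Longrightarrow> T ` Y \<subseteq> Y \<Longrightarrow> \<not> (\<exists>B. finite B \<and> span B = Y)"
    and r1: "F_rep scale T A x q p" and r2: "F_rep scale T A y q' p'"
    and eq: "\<And>a. Fract (p a) q = Fract (p' a) q'"
  shows "x = y"
proof -
  define B where "B = {a. p a \<noteq> 0} \<union> {a. p' a \<noteq> 0}"
  have B: "finite B" using rep_fin[OF r1] rep_fin[OF r2] unfolding B_def by blast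
  have q: "q \<noteq> 0" "q' \<noteq> 0" using r1 r2 unfolding F_rep_def by blast+
  have pe: "p a * q' = p' a * q" for a using eq[of a] eq_fract(1)[OF q, of "p a" "p' a"] by blast
  have e1: "P (q * q') x = (\<Sum>a\<in>B. P (p a * q') a)"
    by (rule mul_rep[OF r1 B]) (auto simp: B_def)
  have e2: "P (q * q') y = (\<Sum>a\<in>B. P (p' a * q) a)"
    by (subst mult.commute, rule mul_rep[OF r2 B]) (auto simp: B_def)
  have "P (q * q') x = P (q * q') y" unfolding e1 e2 pe ..
  then have z: "P (q * q') (x - y) = 0"
    by (metis P_add_x diff_add_cancel add_right_cancel add_0)
  have qq: "q * q' \<noteq> 0" using q by simp
  have "x - y = 0" by (rule P_inj[OF nfd qq z])
  then show ?thesis by simp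
qed

end

theorem lemma2p3:
  fixes scale :: "'k::field \<Rightarrow> 'x::ab_group_add \<Rightarrow> 'x"
    and T :: "'x \<Rightarrow> 'x" and A :: "'x set"
  assumes vs: "vector_space scale"
    and nontriv: "\<exists>x::'x. x \<noteq> 0"
    and lin: "Vector_Spaces.linear scale scale T"
    and no_fd_inv: "\<And>Y. module.subspace scale Y \<Longrightarrow> Y \<noteq> {0} \<Longrightarrow> T ` Y \<subseteq> Y \<Longrightarrow>
                        \<not> (\<exists>B. finite B \<and> module.span scale B = Y)"
    and indep: "T_independent scale T A"
  defines "F \<equiv> F_set scale T A" and "J \<equiv> J_map scale T A"
  shows "module.subspace scale F \<and> T ` F \<subseteq> F
    \<and> (\<forall>x\<in>F. \<forall>a\<in>A. \<forall>q p q' p'. F_rep scale T A x q p \<longrightarrow> F_rep scale T A x q' p' \<longrightarrow>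
            Fract (p a) q = Fract (p' a) q')
    \<and> (\<forall>x\<in>F. (\<exists>q p. F_rep scale T A x q p) \<and>
            (\<forall>q p. F_rep scale T A x q p \<longrightarrow> (\<forall>a\<in>A. J x a = Fract (p a) q)) \<and>
            fin_supp_on A (J x))
    \<and> (\<forall>x\<in>F. \<forall>y\<in>F. J (x + y) = (\<lambda>a. J x a + J y a))
    \<and> (\<forall>c. \<forall>x\<in>F. J (scale c x) = R_scale c (J x))
    \<and> inj_on J F
    \<and> (\<forall>x\<in>F. J (T x) = M_op (J x))
    \<and> M_op ` (J ` F) \<subseteq> J ` F
    \<and> bij_betw J F (J ` F)
    \<and> (\<forall>x\<in>F. T x = the_inv_into F J (M_op (J x)))"
proof -
  interpret opT scale T by (rule opT.intro[OF vs]) (rule opT_axioms.intro[OF lin])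
  have Fi: "x \<in> F \<longleftrightarrow> (\<exists>q p. F_rep scale T A x q p)" for x unfolding F_def by (rule F_iff)
  have Jeq: "J x = (\<lambda>a. Fract (p a) q)" if "F_rep scale T A x q p" for x q p
    unfolding J_def by (rule J_eq[OF indep that])
  have sub: "module.subspace scale F"
  proof (rule subspaceI)
    show "0 \<in> F" using Fi rep_zero by blast
  next
    fix x y assume "x \<in> F" "y \<in> F"
    then show "x + y \<in> F" using Fi rep_add by blast
  next
    fix c x assume "x \<in> F"
    then show "scale c x \<in> F" using Fi rep_scale by blast
  qed
  have TF: "T ` F \<subseteq> F" using Fi rep_T by blast
  have uniq: "\<forall>x\<in>F. \<forall>a\<in>A. \<forall>q p q' p'. F_rep scale T A x q p \<longrightarrow> F_rep scale T A x q' p' \<longrightarrow>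
            Fract (p a) q = Fract (p' a) q'"
    using rep_unique_fract[OF indep] by blast
  have part4: "\<forall>x\<in>F. (\<exists>q p. F_rep scale T A x q p) \<and>
            (\<forall>q p. F_rep scale T A x q p \<longrightarrow> (\<forall>a\<in>A. J x a = Fract (p a) q)) \<and>
            fin_supp_on A (J x)"
  proof
    fix x assume "x \<in> F"
    then obtain q p where r: "F_rep scale T A x q p" using Fi by blast
    have q: "q \<noteq> 0" using r unfolding F_rep_def by blast
    have "{a. J x a \<noteq> 0} = {a. p a \<noteq> 0}" unfolding Jeq[OF r] using Fract0[OF q] by auto
    then have "fin_supp_on A (J x)" using r unfolding F_rep_def fin_supp_on_def by simp
    then show "(\<exists>q p. F_rep scale T A x q p) \<and>
            (\<forall>q p. F_rep scale T A x q p \<longrightarrow> (\<forall>a\<in>A. J x a = Fract (p a) q)) \<and>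
            fin_supp_on A (J x)" using r Jeq by auto
  qed
  have Jadd: "\<forall>x\<in>F. \<forall>y\<in>F. J (x + y) = (\<lambda>a. J x a + J y a)"
  proof (intro ballI)
    fix x y assume "x \<in> F" "y \<in> F"
    then obtain q p q' p' where r1: "F_rep scale T A x q p" and r2: "F_rep scale T A y q' p'"
      using Fi by blast
    have q: "q \<noteq> 0" "q' \<noteq> 0" using r1 r2 unfolding F_rep_def by blast+
    show "J (x + y) = (\<lambda>a. J x a + J y a)"
      unfolding Jeq[OF rep_add[OF r1 r2]] Jeq[OF r1] Jeq[OF r2] using q by simp
  qed
  have Jscale: "\<forall>c. \<forall>x\<in>F. J (scale c x) = R_scale c (J x)"
  proof (intro allI ballI)
    fix c x assume "x \<in> F"
    then obtain q p where r: "F_rep scale T A x q p" using Fi by blast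
    show "J (scale c x) = R_scale c (J x)"
      unfolding Jeq[OF rep_scale[OF r]] Jeq[OF r] R_scale_def by simp
  qed
  have JT: "\<forall>x\<in>F. J (T x) = M_op (J x)"
  proof
    fix x assume "x \<in> F"
    then obtain q p where r: "F_rep scale T A x q p" using Fi by blast
    show "J (T x) = M_op (J x)"
      unfolding Jeq[OF rep_T[OF r]] Jeq[OF r] M_op_def by simp
  qed
  have inj: "inj_on J F"
  proof (rule inj_onI)
    fix x y assume "x \<in> F" "y \<in> F" "J x = J y"
    moreover obtain q p q' p' where r1: "F_rep scale T A x q p" and r2: "F_rep scale T A y q' p'"
      using Fi \<open>x \<in> F\<close> \<open>y \<in> F\<close> by blast
    ultimately have fe: "Fract (p a) q = Fract (p' a) q'" for a
      using Jeq[OF r1] Jeq[OF r2] by metis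
    show "x = y" by (rule J_inj[OF no_fd_inv r1 r2 fe])
  qed
  have Minv: "M_op ` (J ` F) \<subseteq> J ` F"
  proof
    fix z assume "z \<in> M_op ` (J ` F)"
    then obtain x where x: "x \<in> F" "z = M_op (J x)" by blast
    then have "z = J (T x)" using JT by simp
    moreover have "T x \<in> F" using TF x by blast
    ultimately show "z \<in> J ` F" by blast
  qed
  have bij: "bij_betw J F (J ` F)" by (rule inj_on_imp_bij_betw[OF inj])
  have last: "\<forall>x\<in>F. T x = the_inv_into F J (M_op (J x))"
  proof
    fix x assume x: "x \<in> F"
    then have "T x \<in> F" using TF by blast
    then show "T x = the_inv_into F J (M_op (J x))"
      using JT x the_inv_into_f_f[OF inj] by metis
  qed
  show ?thesis using sub TF uniq part4 Jadd Jscale inj JT Minv bij last by blast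
qed

end
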